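(* Let $\Gamma\subseteq\mathit{Aff}(2,\mathbb{H})$ be a subgroup acting freely on $\mathbb{H}^2$. Then $\Gamma$ is conjugate in $\mathit{Aff}(2,\mathbb{H})$ to a subgroup of $G_2$.
   Context: $\mathit{Aff}(2,\mathbb{H})$ is identified with invertible $3\times3$ quaternionic matrices $\begin{pmatrix} a&b&r\\ c&d&s\\ 0&0&1\end{pmatrix}$ acting on $(x,y)\in\mathbb{H}^2$ by $(x,y)\mapsto(ax+by+r,cx+dy+s)$. $G_2=\left\{\begin{pmatrix} 1&b&r\\ 0&d&s\\ 0&0&1\end{pmatrix}: b,r,s,d\in\mathbb{H}, d\neq0\right\}$. *)

theory Defs
  imports Complex_Main "HOL-Algebra.Group"
begin

datatype quat = Quat (qre: real) (qi: real) (qj: real) (qk: real)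

definition qzero :: quat where "qzero = Quat 0 0 0 0"
definition qone :: quat where "qone = Quat 1 0 0 0"

fun qadd :: "quat \<Rightarrow> quat \<Rightarrow> quat" where
  "qadd (Quat a1 b1 c1 d1) (Quat a2 b2 c2 d2) = Quat (a1 + a2) (b1 + b2) (c1 + c2) (d1 + d2)"

text \<open>Hamilton product: i^2 = j^2 = k^2 = ijk = -1.\<close>
fun qmul :: "quat \<Rightarrow> quat \<Rightarrow> quat" where
  "qmul (Quat a1 b1 c1 d1) (Quat a2 b2 c2 d2) =
     Quat (a1*a2 - b1*b2 - c1*c2 - d1*d2)
          (a1*b2 + b1*a2 + c1*d2 - d1*c2)
          (a1*c2 - b1*d2 + c1*a2 + d1*b2)
          (a1*d2 + b1*c2 - c1*b2 + d1*a2)"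

text \<open>AffM a b c d r s  represents the matrix ((a,b,r),(c,d,s),(0,0,1)).\<close>
datatype affm = AffM (ma: quat) (mb: quat) (mc: quat) (md: quat) (mr: quat) (ms: quat)

definition affmul :: "affm \<Rightarrow> affm \<Rightarrow> affm" where
  "affmul g h = AffM
     (qadd (qmul (ma g) (ma h)) (qmul (mb g) (mc h)))
     (qadd (qmul (ma g) (mb h)) (qmul (mb g) (md h)))
     (qadd (qmul (mc g) (ma h)) (qmul (md g) (mc h)))
     (qadd (qmul (mc g) (mb h)) (qmul (md g) (md h)))
     (qadd (qadd (qmul (ma g) (mr h)) (qmul (mb g) (ms h))) (mr g))
     (qadd (qadd (qmul (mc g) (mr h)) (qmul (md g) (ms h))) (ms g))"

definition affid :: affm where
  "affid = AffM qone qzero qzero qone qzero qzero"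

text \<open>Invertibility of the 3x3 matrix (an inverse of such a matrix automatically
  has last row (0,0,1)).\<close>
definition aff_invertible :: "affm \<Rightarrow> bool" where
  "aff_invertible g \<longleftrightarrow> (\<exists>h. affmul g h = affid \<and> affmul h g = affid)"

definition aff_act :: "affm \<Rightarrow> quat \<times> quat \<Rightarrow> quat \<times> quat" where
  "aff_act g p = (qadd (qadd (qmul (ma g) (fst p)) (qmul (mb g) (snd p))) (mr g),
                  qadd (qadd (qmul (mc g) (fst p)) (qmul (md g) (snd p))) (ms g))"

definition Aff2H :: "affm monoid" where
  "Aff2H = \<lparr>carrier = {g. aff_invertible g}, mult = affmul, one = affid\<rparr>"

definition G2 :: "affm set" where
  "G2 = {g. ma g = qone \<and> mc g = qzero \<and> md g \<noteq> qzero}"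

definition acts_freely :: "affm set \<Rightarrow> bool" where
  "acts_freely \<Gamma> \<longleftrightarrow> (\<forall>g\<in>\<Gamma>. \<forall>p. aff_act g p = p \<longrightarrow> g = affid)"

end

theory Submission
  imports Defs
begin



definition qinv :: "quat \<Rightarrow> quat" where "qinv x = (let n = (qre x)^2 + (qi x)^2 + (qj x)^2 + (qk x)^2 in
   Quat (qre x / n) (- qi x / n) (- qj x / n) (- qk x / n))"

lemma qeq0: "(x::quat) = y \<longleftrightarrow> qre x = qre y \<and> qi x = qi y \<and> qj x = qj y \<and> qk x = qk y"
  by (cases x; cases y) auto

lemma qinv_lemma:
  assumes "a \<noteq> qzero"
  shows "qmul (qinv a) a = qone" "qmul a (qinv a) = qone"
proof -
  obtain w x y z where a: "a = Quat w x y z" by (cases a)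
  have "w \<noteq> 0 \<or> x \<noteq> 0 \<or> y \<noteq> 0 \<or> z \<noteq> 0" using assms unfolding a qzero_def by auto
  then have n: "w^2 + x^2 + y^2 + z^2 \<noteq> 0"
    by (smt (verit) zero_less_power2 zero_le_power2)
  define N where "N = w^2 + x^2 + y^2 + z^2"
  have N: "N \<noteq> 0" using n N_def by simp
  have qa: "qinv a = Quat (w/N) (-x/N) (-y/N) (-z/N)" unfolding a qinv_def N_def by (simp add: Let_def)
  have s: "(w*w + x*x + y*y + z*z)/N = 1" using N unfolding N_def by (simp add: power2_eq_square)
  have "qmul (qinv a) a = Quat ((w*w + x*x + y*y + z*z)/N) 0 0 0" unfolding qa
    by (simp add: a field_simps add_divide_distrib)
  then show "qmul (qinv a) a = qone" using s by (simp add: qone_def)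
  have "qmul a (qinv a) = Quat ((w*w + x*x + y*y + z*z)/N) 0 0 0" unfolding qa
    by (simp add: a field_simps add_divide_distrib)
  then show "qmul a (qinv a) = qone" using s by (simp add: qone_def)
qed

instantiation quat :: division_ring
begin
definition "0 = qzero"
definition "1 = qone"
definition "x + y = qadd x y"
definition "x * y = qmul x y"
definition "- (x::quat) = Quat (- qre x) (- qi x) (- qj x) (- qk x)"
definition "x - y = x + (- (y::quat))"
definition "inverse (x::quat) = qinv x"
definition "divide x y = (x::quat) * qinv y"
lemma qsimps0:
  "qre (x + y) = qre x + qre y" "qi (x + y) = qi x + qi y" "qj (x + y) = qj x + qj y" "qk (x + y) = qk x + qk y"
  "qre (x * y) = qre x * qre y - qi x * qi y - qj x * qj y - qk x * qk y"
  "qi (x * y) = qre x * qi y + qi x * qre y + qj x * qk y - qk x * qj y"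
  "qj (x * y) = qre x * qj y - qi x * qk y + qj x * qre y + qk x * qi y"
  "qk (x * y) = qre x * qk y + qi x * qj y - qj x * qi y + qk x * qre y"
  "qre 0 = 0" "qi 0 = 0" "qj 0 = 0" "qk 0 = 0"
  "qre 1 = 1" "qi 1 = 0" "qj 1 = 0" "qk 1 = 0"
  "qre (- x) = - qre x" "qi (- x) = - qi x" "qj (- x) = - qj x" "qk (- x) = - qk x"
  "qre (x - y) = qre x - qre y" "qi (x - y) = qi x - qi y" "qj (x - y) = qj x - qj y" "qk (x - y) = qk x - qk y"
  by (cases x; cases y; simp add: plus_quat_def times_quat_def zero_quat_def one_quat_def qzero_def qone_def
      uminus_quat_def minus_quat_def)+
instance
proof (standard, goal_cases)
  case 1 then show ?case by (simp add: qeq0 qsimps0 algebra_simps; fail | simp add: inverse_quat_def times_quat_def one_quat_def zero_quat_def qinv_lemma; fail | simp add: divide_quat_def inverse_quat_def; fail | simp add: inverse_quat_def zero_quat_def qinv_def qzero_def Let_def)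
next case 2 then show ?case by (simp add: qeq0 qsimps0 algebra_simps; fail | simp add: inverse_quat_def times_quat_def one_quat_def zero_quat_def qinv_lemma; fail | simp add: divide_quat_def inverse_quat_def; fail | simp add: inverse_quat_def zero_quat_def qinv_def qzero_def Let_def)
next case 3 then show ?case by (simp add: qeq0 qsimps0 algebra_simps; fail | simp add: inverse_quat_def times_quat_def one_quat_def zero_quat_def qinv_lemma; fail | simp add: divide_quat_def inverse_quat_def; fail | simp add: inverse_quat_def zero_quat_def qinv_def qzero_def Let_def)
next case 4 then show ?case by (simp add: qeq0 qsimps0 algebra_simps; fail | simp add: inverse_quat_def times_quat_def one_quat_def zero_quat_def qinv_lemma; fail | simp add: divide_quat_def inverse_quat_def; fail | simp add: inverse_quat_def zero_quat_def qinv_def qzero_def Let_def)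
next case 5 then show ?case by (simp add: qeq0 qsimps0 algebra_simps; fail | simp add: inverse_quat_def times_quat_def one_quat_def zero_quat_def qinv_lemma; fail | simp add: divide_quat_def inverse_quat_def; fail | simp add: inverse_quat_def zero_quat_def qinv_def qzero_def Let_def)
next case 6 then show ?case by (simp add: qeq0 qsimps0 algebra_simps; fail | simp add: inverse_quat_def times_quat_def one_quat_def zero_quat_def qinv_lemma; fail | simp add: divide_quat_def inverse_quat_def; fail | simp add: inverse_quat_def zero_quat_def qinv_def qzero_def Let_def)
next case 7 then show ?case by (simp add: qeq0 qsimps0 algebra_simps; fail | simp add: inverse_quat_def times_quat_def one_quat_def zero_quat_def qinv_lemma; fail | simp add: divide_quat_def inverse_quat_def; fail | simp add: inverse_quat_def zero_quat_def qinv_def qzero_def Let_def)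
next case 8 then show ?case by (simp add: qeq0 qsimps0 algebra_simps; fail | simp add: inverse_quat_def times_quat_def one_quat_def zero_quat_def qinv_lemma; fail | simp add: divide_quat_def inverse_quat_def; fail | simp add: inverse_quat_def zero_quat_def qinv_def qzero_def Let_def)
next case 9 then show ?case by (simp add: qeq0 qsimps0 algebra_simps; fail | simp add: inverse_quat_def times_quat_def one_quat_def zero_quat_def qinv_lemma; fail | simp add: divide_quat_def inverse_quat_def; fail | simp add: inverse_quat_def zero_quat_def qinv_def qzero_def Let_def)
next case 10 then show ?case by (simp add: qeq0 qsimps0 algebra_simps; fail | simp add: inverse_quat_def times_quat_def one_quat_def zero_quat_def qinv_lemma; fail | simp add: divide_quat_def inverse_quat_def; fail | simp add: inverse_quat_def zero_quat_def qinv_def qzero_def Let_def)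
next case 11 then show ?case by (simp add: qeq0 qsimps0 algebra_simps; fail | simp add: inverse_quat_def times_quat_def one_quat_def zero_quat_def qinv_lemma; fail | simp add: divide_quat_def inverse_quat_def; fail | simp add: inverse_quat_def zero_quat_def qinv_def qzero_def Let_def)
next case 12 then show ?case by (simp add: qeq0 qsimps0 algebra_simps; fail | simp add: inverse_quat_def times_quat_def one_quat_def zero_quat_def qinv_lemma; fail | simp add: divide_quat_def inverse_quat_def; fail | simp add: inverse_quat_def zero_quat_def qinv_def qzero_def Let_def)
next case 13 then show ?case by (simp add: qeq0 qsimps0 algebra_simps; fail | simp add: inverse_quat_def times_quat_def one_quat_def zero_quat_def qinv_lemma; fail | simp add: divide_quat_def inverse_quat_def; fail | simp add: inverse_quat_def zero_quat_def qinv_def qzero_def Let_def)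
next case 14 then show ?case by (simp add: qeq0 qsimps0 algebra_simps; fail | simp add: inverse_quat_def times_quat_def one_quat_def zero_quat_def qinv_lemma; fail | simp add: divide_quat_def inverse_quat_def; fail | simp add: inverse_quat_def zero_quat_def qinv_def qzero_def Let_def)
next case 15 then show ?case by (simp add: qeq0 qsimps0 algebra_simps; fail | simp add: inverse_quat_def times_quat_def one_quat_def zero_quat_def qinv_lemma; fail | simp add: divide_quat_def inverse_quat_def; fail | simp add: inverse_quat_def zero_quat_def qinv_def qzero_def Let_def)
qed
end

lemma qops: "qadd x y = x + y" "qmul x y = x * y" "qzero = 0" "qone = 1"
  by (simp_all add: plus_quat_def times_quat_def zero_quat_def one_quat_def)




lemma affm_eq: "x = y \<longleftrightarrow> ma x = ma y \<and> mb x = mb y \<and> mc x = mc y \<and> md x = md y \<and> mr x = mr y \<and> ms x = ms y"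
  by (cases x; cases y) auto

lemma affmul_sel [simp]:
  "ma (affmul g h) = ma g * ma h + mb g * mc h"
  "mb (affmul g h) = ma g * mb h + mb g * md h"
  "mc (affmul g h) = mc g * ma h + md g * mc h"
  "md (affmul g h) = mc g * mb h + md g * md h"
  "mr (affmul g h) = ma g * mr h + mb g * ms h + mr g"
  "ms (affmul g h) = mc g * mr h + md g * ms h + ms g"
  by (simp_all add: affmul_def qops)

lemma affid_sel [simp]:
  "ma affid = 1" "mb affid = 0" "mc affid = 0" "md affid = 1" "mr affid = 0" "ms affid = 0"
  by (simp_all add: affid_def qops)

lemma aff_act_eq: "aff_act g p = (ma g * fst p + mb g * snd p + mr g, mc g * fst p + md g * snd p + ms g)"
  by (simp add: aff_act_def qops)

lemma affmul_assoc: "affmul (affmul a b) c = affmul a (affmul b c)"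
  by (simp add: affm_eq algebra_simps)

lemma affmul_id: "affmul affid a = a" "affmul a affid = a"
  by (simp_all add: affm_eq)

lemma Aff2H_simps: "mult Aff2H = affmul" "one Aff2H = affid" "carrier Aff2H = {g. aff_invertible g}"
  by (simp_all add: Aff2H_def)

declare Aff2H_simps[simp]

lemma grp: "group Aff2H"
proof (rule groupI)
  fix x y assume "x \<in> carrier Aff2H" "y \<in> carrier Aff2H"
  then obtain x' y' where "affmul x x' = affid" "affmul x' x = affid" "affmul y y' = affid" "affmul y' y = affid"
    by (auto simp: aff_invertible_def)
  then show "x \<otimes>\<^bsub>Aff2H\<^esub> y \<in> carrier Aff2H"
    unfolding Aff2H_simps aff_invertible_def mem_Collect_eq
    by (intro exI[of _ "affmul y' x'"]) (metis affmul_assoc affmul_id)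
next
  show "\<one>\<^bsub>Aff2H\<^esub> \<in> carrier Aff2H" by (auto simp: aff_invertible_def affmul_id intro: exI[of _ affid])
next
  fix x y z show "x \<otimes>\<^bsub>Aff2H\<^esub> y \<otimes>\<^bsub>Aff2H\<^esub> z = x \<otimes>\<^bsub>Aff2H\<^esub> (y \<otimes>\<^bsub>Aff2H\<^esub> z)"
    by (simp add: affmul_assoc)
next
  fix x show "\<one>\<^bsub>Aff2H\<^esub> \<otimes>\<^bsub>Aff2H\<^esub> x = x" by (simp add: affmul_id)
next
  fix x assume "x \<in> carrier Aff2H"
  then obtain x' where "affmul x x' = affid" "affmul x' x = affid" by (auto simp: aff_invertible_def)
  then show "\<exists>y\<in>carrier Aff2H. y \<otimes>\<^bsub>Aff2H\<^esub> x = \<one>\<^bsub>Aff2H\<^esub>"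
    by (auto simp: aff_invertible_def intro!: bexI[of _ x'])
qed

lemma inv_props:
  assumes "g \<in> carrier Aff2H"
  shows "affmul g (inv\<^bsub>Aff2H\<^esub> g) = affid" "affmul (inv\<^bsub>Aff2H\<^esub> g) g = affid"
    "inv\<^bsub>Aff2H\<^esub> g \<in> carrier Aff2H"
  using group.r_inv[OF grp assms] group.l_inv[OF grp assms] group.inv_closed[OF grp assms] by (simp_all add: Aff2H_simps)

lemma inv_explicit:
  assumes "affmul k k' = affid" "affmul k' k = affid"
  shows "k \<in> carrier Aff2H" "inv\<^bsub>Aff2H\<^esub> k = k'"
proof -
  show k: "k \<in> carrier Aff2H" using assms by (auto simp: aff_invertible_def Aff2H_simps)
  have "k' \<in> carrier Aff2H" using assms by (auto simp: aff_invertible_def Aff2H_simps)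
  then show "inv\<^bsub>Aff2H\<^esub> k = k'" using group.inv_equality[OF grp _ k] assms by (simp add: Aff2H_simps)
qed

declare Aff2H_simps[simp del]

definition lin :: "affm \<Rightarrow> quat \<times> quat \<Rightarrow> quat \<times> quat" where
  "lin g v = (ma g * fst v + mb g * snd v, mc g * fst v + md g * snd v)"

lemma lin_mul: "lin (affmul g h) v = lin g (lin h v)"
  by (simp add: lin_def algebra_simps)

lemma lin_id: "lin affid v = v"
  by (simp add: lin_def)

lemma act_mul: "aff_act (affmul g h) p = aff_act g (aff_act h p)"
  by (simp add: aff_act_eq algebra_simps)

lemma act_id: "aff_act affid p = p"
  by (simp add: aff_act_eq)

lemma lin_e1: "lin g (1,0) = (ma g, mc g)" and lin_e2: "lin g (0,1) = (mb g, md g)"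
  by (simp_all add: lin_def)

definition conjS :: "affm \<Rightarrow> affm set \<Rightarrow> affm set" where
  "conjS k \<Gamma> = (\<lambda>g. k \<otimes>\<^bsub>Aff2H\<^esub> g \<otimes>\<^bsub>Aff2H\<^esub> inv\<^bsub>Aff2H\<^esub> k) ` \<Gamma>"

lemma lin_conj: "k \<in> carrier Aff2H \<Longrightarrow> lin (k \<otimes>\<^bsub>Aff2H\<^esub> g \<otimes>\<^bsub>Aff2H\<^esub> inv\<^bsub>Aff2H\<^esub> k) v = lin k (lin g (lin (inv\<^bsub>Aff2H\<^esub> k) v))"
  by (simp add: lin_mul Aff2H_simps)

lemma lin_cancel: "affmul k' k = affid \<Longrightarrow> lin k' (lin k v) = v"
  by (metis lin_mul lin_id)




lemma conj_ok:
  assumes sg: "subgroup \<Gamma> Aff2H" and fr: "acts_freely \<Gamma>" and k: "k \<in> carrier Aff2H"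
  shows "subgroup (conjS k \<Gamma>) Aff2H" "acts_freely (conjS k \<Gamma>)"
proof -
  interpret G: group Aff2H by (rule grp)
  have sub: "\<And>g. g \<in> \<Gamma> \<Longrightarrow> g \<in> carrier Aff2H" by (rule subgroup.mem_carrier[OF sg])
  show "subgroup (conjS k \<Gamma>) Aff2H"
  proof (rule G.subgroupI)
    show "conjS k \<Gamma> \<subseteq> carrier Aff2H" using sub k by (auto simp: conjS_def)
    show "conjS k \<Gamma> \<noteq> {}" using subgroup.one_closed[OF sg] by (auto simp: conjS_def)
  next
    fix a assume "a \<in> conjS k \<Gamma>"
    then obtain g where g: "g \<in> \<Gamma>" "a = k \<otimes>\<^bsub>Aff2H\<^esub> g \<otimes>\<^bsub>Aff2H\<^esub> inv\<^bsub>Aff2H\<^esub> k" by (auto simp: conjS_def)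
    have "inv\<^bsub>Aff2H\<^esub> a = k \<otimes>\<^bsub>Aff2H\<^esub> inv\<^bsub>Aff2H\<^esub> g \<otimes>\<^bsub>Aff2H\<^esub> inv\<^bsub>Aff2H\<^esub> k"
      using g sub[OF g(1)] k by (simp add: G.inv_mult_group G.m_assoc)
    then show "inv\<^bsub>Aff2H\<^esub> a \<in> conjS k \<Gamma>"
      unfolding conjS_def using subgroup.m_inv_closed[OF sg g(1)] by blast
  next
    fix a b assume "a \<in> conjS k \<Gamma>" "b \<in> conjS k \<Gamma>"
    then obtain g h where g: "g \<in> \<Gamma>" "a = k \<otimes>\<^bsub>Aff2H\<^esub> g \<otimes>\<^bsub>Aff2H\<^esub> inv\<^bsub>Aff2H\<^esub> k"
      and h: "h \<in> \<Gamma>" "b = k \<otimes>\<^bsub>Aff2H\<^esub> h \<otimes>\<^bsub>Aff2H\<^esub> inv\<^bsub>Aff2H\<^esub> k" by (auto simp: conjS_def)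
    have "a \<otimes>\<^bsub>Aff2H\<^esub> b = k \<otimes>\<^bsub>Aff2H\<^esub> (g \<otimes>\<^bsub>Aff2H\<^esub> h) \<otimes>\<^bsub>Aff2H\<^esub> inv\<^bsub>Aff2H\<^esub> k"
      using g h sub[OF g(1)] sub[OF h(1)] k inv_props[OF k] unfolding Aff2H_simps
      by (simp add: affmul_assoc affmul_id flip: affmul_assoc[of "inv\<^bsub>Aff2H\<^esub> k" k])
    then show "a \<otimes>\<^bsub>Aff2H\<^esub> b \<in> conjS k \<Gamma>"
      unfolding conjS_def using subgroup.m_closed[OF sg g(1) h(1)] by blast
  qed
  show "acts_freely (conjS k \<Gamma>)"
    unfolding acts_freely_def
  proof (intro ballI allI impI)
    fix a p assume a: "a \<in> conjS k \<Gamma>" and fp: "aff_act a p = p"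
    then obtain g where g: "g \<in> \<Gamma>" "a = k \<otimes>\<^bsub>Aff2H\<^esub> g \<otimes>\<^bsub>Aff2H\<^esub> inv\<^bsub>Aff2H\<^esub> k" by (auto simp: conjS_def)
    let ?k' = "inv\<^bsub>Aff2H\<^esub> k"
    have e: "affmul ?k' a = affmul g ?k'" unfolding g(2) Aff2H_simps
      using inv_props(2)[OF k] by (simp add: affmul_assoc[symmetric] affmul_id)
    have "aff_act ?k' (aff_act a p) = aff_act ?k' p" using fp by simp
    then have "aff_act g (aff_act ?k' p) = aff_act ?k' p"
      by (metis e act_mul)
    then have "g = affid" using fr g(1) unfolding acts_freely_def by blast
    then show "a = affid" using g(2) inv_props(1)[OF k] by (simp add: Aff2H_simps affmul_id)
  qed
qed




lemma solve2_aux: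
  fixes p q r s t1 t2 :: "'a::division_ring"
  assumes p: "p \<noteq> 0"
  shows "(\<exists>x y. p*x + q*y = t1 \<and> r*x + s*y = t2) \<or> (\<exists>x y. (x \<noteq> 0 \<or> y \<noteq> 0) \<and> p*x + q*y = 0 \<and> r*x + s*y = 0)"
proof (cases "s - r * inverse p * q = 0")
  case True
  define x where "x = - (inverse p * q)"
  have "p * x + q * 1 = 0" unfolding x_def using p by (simp add: mult.assoc[symmetric])
  moreover have "r * x + s * 1 = 0" unfolding x_def using True by (simp add: mult.assoc algebra_simps)
  ultimately show ?thesis by (metis one_neq_zero)
next
  case False
  define d where "d = s - r * inverse p * q"
  define y where "y = inverse d * (t2 - r * inverse p * t1)"
  define x where "x = inverse p * (t1 - q * y)"
  have "p * x + q * y = t1" unfolding x_def using p by (simp add: mult.assoc[symmetric])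
  moreover have "r * x + s * y = t2"
  proof -
    have "r * x + s * y = r * inverse p * t1 + d * y" unfolding x_def d_def
      by (simp add: algebra_simps mult.assoc)
    also have "d * y = t2 - r * inverse p * t1" unfolding y_def using False d_def
      by (simp add: mult.assoc[symmetric])
    finally show ?thesis by simp
  qed
  ultimately show ?thesis by blast
qed

lemma solve2:
  fixes p q r s t1 t2 :: "'a::division_ring"
  shows "(\<exists>x y. p*x + q*y = t1 \<and> r*x + s*y = t2) \<or> (\<exists>x y. (x \<noteq> 0 \<or> y \<noteq> 0) \<and> p*x + q*y = 0 \<and> r*x + s*y = 0)"
proof -
  consider "p \<noteq> 0" | "p = 0" "r \<noteq> 0" | "p = 0" "r = 0" by auto
  then show ?thesis
  proof cases
    case 1 then show ?thesis using solve2_aux by blast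
  next
    case 2 then show ?thesis using solve2_aux[of r s t2 p q t1] by blast
  next
    case 3 show ?thesis proof (rule disjI2)
      show "\<exists>x y. (x \<noteq> 0 \<or> y \<noteq> 0) \<and> p*x + q*y = 0 \<and> r*x + s*y = 0"
        using 3 by (intro exI[of _ 1] exI[of _ 0]) simp
    qed
  qed
qed




lemma alg1: "((m::'a::ring_1) - 1) * x + b = - c \<Longrightarrow> m * x + b + c = x"
  by (simp add: algebra_simps)

lemma alg2: "((m::'a::ring_1) - 1) * x + b = 0 \<Longrightarrow> m * x + b = x"
  by (simp add: algebra_simps)

lemma fixvec:
  assumes sg: "subgroup \<Gamma> Aff2H" and fr: "acts_freely \<Gamma>" and g: "g \<in> \<Gamma>"
  shows "\<exists>v. v \<noteq> (0,0) \<and> lin g v = v"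
proof -
  consider (A) x y where "(ma g - 1) * x + mb g * y = - mr g" "mc g * x + (md g - 1) * y = - ms g"
    | (B) x y where "x \<noteq> 0 \<or> y \<noteq> 0" "(ma g - 1) * x + mb g * y = 0" "mc g * x + (md g - 1) * y = 0"
    using solve2[of "ma g - 1" "mb g" "- mr g" "mc g" "md g - 1" "- ms g"] by blast
  then show ?thesis
  proof cases
    case (A x y)
    note e1 = A(1) and e2 = A(2)
    have e2': "(md g - 1) * y + mc g * x = - ms g" using e2 by (simp add: add.commute)
    have "aff_act g (x, y) = (x, y)" unfolding aff_act_eq using alg1[OF e1] alg1[OF e2']
      by (simp add: add.commute add.left_commute)
    then have "g = affid" using fr g unfolding acts_freely_def by blast
    show ?thesis using \<open>g = affid\<close> by (intro exI[of _ "(1,0)"]) (simp add: lin_id)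
  next
    case (B x y)
    note nz = B(1) and e1 = B(2) and e2 = B(3)
    have e2': "(md g - 1) * y + mc g * x = 0" using e2 by (simp add: add.commute)
    have "lin g (x, y) = (x, y)" unfolding lin_def using alg2[OF e1] alg2[OF e2']
      by (simp add: add.commute)
    then show ?thesis using nz by (intro exI[of _ "(x,y)"]) simp
  qed
qed

lemma comm_P:
  assumes sg: "subgroup \<Gamma> Aff2H" and fr: "acts_freely \<Gamma>" and g: "g \<in> \<Gamma>" and h: "h \<in> \<Gamma>"
    and Pg: "mc g = 0" "md g = 1" and Ph: "mc h = 0" "md h = 1"
  shows "lin g (lin h v) = lin h (lin g v)"
proof -
  define g' where "g' = inv\<^bsub>Aff2H\<^esub> g"
  define h' where "h' = inv\<^bsub>Aff2H\<^esub> h"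
  have gc: "g \<in> carrier Aff2H" by (rule subgroup.mem_carrier[OF sg g])
  have hc: "h \<in> carrier Aff2H" by (rule subgroup.mem_carrier[OF sg h])
  have ig: "affmul g g' = affid" "affmul g' g = affid" using inv_props[OF gc] g'_def by simp_all
  have ih: "affmul h h' = affid" "affmul h' h = affid" using inv_props[OF hc] h'_def by simp_all
  have g'G: "g' \<in> \<Gamma>" using subgroup.m_inv_closed[OF sg g] g'_def by simp
  have h'G: "h' \<in> \<Gamma>" using subgroup.m_inv_closed[OF sg h] h'_def by simp
  have Pg': "mc g' = 0" "md g' = 1" "ms g' = - ms g"
    using arg_cong[OF ig(1), of mc] arg_cong[OF ig(1), of md] arg_cong[OF ig(1), of ms] Pg
    by (simp_all add: eq_neg_iff_add_eq_0)
  have Ph': "mc h' = 0" "md h' = 1" "ms h' = - ms h"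
    using arg_cong[OF ih(1), of mc] arg_cong[OF ih(1), of md] arg_cong[OF ih(1), of ms] Ph
    by (simp_all add: eq_neg_iff_add_eq_0)
  define c where "c = affmul (affmul (affmul g h) g') h'"
  have cG: "c \<in> \<Gamma>" unfolding c_def
    using subgroup.m_closed[OF sg] g h g'G h'G unfolding Aff2H_simps by metis
  have cP: "mc c = 0" "md c = 1" "ms c = 0" unfolding c_def using Pg Ph Pg' Ph'
    by (simp_all add: algebra_simps)
  have free: "\<And>p. aff_act c p = p \<Longrightarrow> c = affid" using fr cG unfolding acts_freely_def by blast
  have ma1: "ma c = 1"
  proof (rule ccontr)
    assume ne: "ma c \<noteq> 1"
    define x where "x = - (inverse (ma c - 1) * mr c)"
    have "(ma c - 1) * x + 0 = - mr c" using ne unfolding x_def by (simp add: mult.assoc[symmetric])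
    then have "ma c * x + 0 + mr c = x" by (rule alg1)
    then have "aff_act c (x, 0) = (x, 0)" by (simp add: aff_act_eq cP)
    then have "c = affid" by (rule free)
    then show False using ne by simp
  qed
  have mb0: "mb c = 0"
  proof (rule ccontr)
    assume ne: "mb c \<noteq> 0"
    define y where "y = - (inverse (mb c) * mr c)"
    have "mb c * y = - mr c" using ne unfolding y_def by (simp add: mult.assoc[symmetric])
    then have "aff_act c (0, y) = (0, y)" by (simp add: aff_act_eq cP)
    then have "c = affid" by (rule free)
    then show False using ne by simp
  qed
  have linc: "\<And>w. lin c w = w" by (simp add: lin_def ma1 mb0 cP)
  have "lin c (lin h (lin g v)) = lin g (lin h (lin g' (lin h' (lin h (lin g v)))))"
    unfolding c_def by (simp add: lin_mul)
  also have "\<dots> = lin g (lin h v)" using lin_cancel[OF ih(2)] lin_cancel[OF ig(2)] by simp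
  finally show ?thesis using linc by simp
qed




lemma rcancel: "(z::'a::division_ring) * x = 0 \<Longrightarrow> x \<noteq> 0 \<Longrightarrow> z = 0"
  by simp

lemma core2:
  assumes sg: "subgroup \<Gamma> Aff2H" and fr: "acts_freely \<Gamma>" and a: "a \<in> \<Gamma>" and g: "g \<in> \<Gamma>"
    and A1: "ma a = 1" and A2: "mc a = 0" and A3: "\<not> (mb a = 0 \<and> md a = 1)"
    and B1: "mb g = 0" and B2: "md g = 1" and B3: "\<not> (ma g = 1 \<and> mc g = 0)"
  shows False
proof -
  define b where "b = mb a"
  define d where "d = md a"
  define a' where "a' = ma g"
  define c' where "c' = mc g"
  have agG: "affmul a g \<in> \<Gamma>" using subgroup.m_closed[OF sg a g] by (simp add: Aff2H_simps)
  obtain v where nz: "v \<noteq> (0,0)" and fv: "lin (affmul a g) v = v" using fixvec[OF sg fr agG] by blast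
  obtain x y where v: "v = (x, y)" by (cases v)
  have nz': "x \<noteq> 0 \<or> y \<noteq> 0" using nz v by simp
  have e1: "a' * x + b * (c' * x + y) = x" and e2: "d * (c' * x + y) = y"
    using fv unfolding v lin_mul by (simp_all add: lin_def A1 A2 B1 B2 a'_def b_def c'_def d_def)
  define q where "q = b * inverse (d - 1)"
  have F: "(d = 1 \<and> c' = 0) \<or> (d \<noteq> 1 \<and> c' \<noteq> 0 \<and> a' = 1 + q * c')"
  proof (cases "d = 1")
    case True
    then have b0: "b \<noteq> 0" using A3 b_def d_def by simp
    have cx: "c' * x = 0" using e2 True by simp
    have "c' = 0"
    proof (rule ccontr)
      assume "c' \<noteq> 0"
      then have "x = 0" using cx by simp
      then have "y = 0" using e1 b0 cx by simp
      then show False using nz' \<open>x = 0\<close> by simp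
    qed
    then show ?thesis using True by simp
  next
    case False
    then have d1: "d - 1 \<noteq> 0" by simp
    have qd: "q * (d - 1) = b" unfolding q_def using d1 by (simp add: mult.assoc)
    have e2': "(d - 1) * y = - (d * c' * x)" using e2 by (simp add: algebra_simps mult.assoc eq_neg_iff_add_eq_0)
    have x0: "x \<noteq> 0"
    proof
      assume "x = 0"
      then have "(d - 1) * y = 0" using e2' by simp
      then have "y = 0" using d1 by simp
      then show False using nz' \<open>x = 0\<close> by simp
    qed
    have by_: "b * y = - ((b + q) * c' * x)"
    proof -
      have "b * y = q * ((d - 1) * y)" using qd by (simp add: mult.assoc[symmetric])
      also have "\<dots> = - (q * d * c' * x)" using e2' by (simp add: mult.assoc)
      also have "q * d = b + q" using qd by (simp add: algebra_simps)
      finally show ?thesis by simp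
    qed
    have "(a' - 1 - q * c') * x = 0"
      using e1 by_ by (simp add: algebra_simps mult.assoc)
    then have "a' - 1 = q * c'" using x0 by simp
    then have a1: "a' = 1 + q * c'" by (metis add.commute diff_add_cancel)
    have "c' \<noteq> 0"
    proof
      assume "c' = 0"
      then have "a' = 1" using a1 by simp
      then show False using B3 \<open>c' = 0\<close> a'_def c'_def by simp
    qed
    then show ?thesis using False a1 by simp
  qed
  have comm: "\<And>w. lin a (lin g w) = lin g (lin a w)"
  proof -
    fix w
    show "lin a (lin g w) = lin g (lin a w)"
    proof (cases "d = 1")
      case True
      then have "c' = 0" using F by simp
      then show ?thesis using comm_P[OF sg fr a g A2 _ _ B2] True d_def c'_def by simp
    next
      case False
      then have a1: "a' = 1 + q * c'" using F by simp
      have d1: "d - 1 \<noteq> 0" using False by simp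
      have qd0: "q * (d - 1) = b" unfolding q_def using d1 by (simp add: mult.assoc)
      have qd: "q * d = b + q" using qd0 by (simp add: algebra_simps)
      define K where "K = AffM 0 1 1 (- q) 0 0"
      define K' where "K' = AffM q 1 1 0 0 0"
      have KK: "affmul K K' = affid" "affmul K' K = affid" unfolding K_def K'_def by (simp_all add: affm_eq)
      note Kc = inv_explicit[OF KK]
      note ok = conj_ok[OF sg fr Kc(1)]
      define A where "A = K \<otimes>\<^bsub>Aff2H\<^esub> a \<otimes>\<^bsub>Aff2H\<^esub> inv\<^bsub>Aff2H\<^esub> K"
      define B where "B = K \<otimes>\<^bsub>Aff2H\<^esub> g \<otimes>\<^bsub>Aff2H\<^esub> inv\<^bsub>Aff2H\<^esub> K"
      have AG: "A \<in> conjS K \<Gamma>" "B \<in> conjS K \<Gamma>" unfolding A_def B_def conjS_def using a g by auto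
      have Aeq: "A = affmul (affmul K a) K'" "B = affmul (affmul K g) K'"
        unfolding A_def B_def Kc(2) by (simp_all add: Aff2H_simps)
      have PA: "mc A = 0" "md A = 1" unfolding Aeq K_def K'_def
        using A1 A2 qd by (simp_all add: b_def[symmetric] d_def[symmetric] algebra_simps)
      have PB: "mc B = 0" "md B = 1" unfolding Aeq K_def K'_def
        using B1 B2 a1 by (simp_all add: a'_def[symmetric] c'_def[symmetric] algebra_simps mult.assoc)
      have cAB: "lin A (lin B (lin K w)) = lin B (lin A (lin K w))"
        by (rule comm_P[OF ok AG PA PB])
      have LA: "\<And>u. lin A (lin K u) = lin K (lin a u)" unfolding Aeq lin_mul using lin_cancel[OF KK(2)] by simp
      have LB: "\<And>u. lin B (lin K u) = lin K (lin g u)" unfolding Aeq lin_mul using lin_cancel[OF KK(2)] by simp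
      have "lin K (lin a (lin g w)) = lin K (lin g (lin a w))" using cAB LA LB by simp
      then show ?thesis using lin_cancel[OF KK(2)] by metis
    qed
  qed
  have c1: "lin a (lin g (1,0)) = lin g (lin a (1,0))" and c2: "lin a (lin g (0,1)) = lin g (lin a (0,1))"
    using comm by simp_all
  have r1: "b * c' = 0" "d * c' = c'" using c1
    by (simp_all add: lin_def A1 A2 B1 B2 a'_def[symmetric] b_def[symmetric] c'_def[symmetric] d_def[symmetric])
  have r2: "b = a' * b" "c' * b = 0" using c2
    by (simp_all add: lin_def A1 A2 B1 B2 a'_def[symmetric] b_def[symmetric] c'_def[symmetric] d_def[symmetric])
  show False
  proof (cases "b = 0")
    case False
    then have "c' = 0" using r2(2) by simp
    moreover have "(a' - 1) * b = 0" using r2(1) by (simp add: algebra_simps)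
    then have "a' = 1" using False by simp
    ultimately show False using B3 a'_def c'_def by simp
  next
    case True
    then have d1: "d \<noteq> 1" using A3 b_def d_def by simp
    then have "c' \<noteq> 0" using F by simp
    moreover have "(d - 1) * c' = 0" using r1(2) by (simp add: algebra_simps)
    ultimately show False using d1 by simp
  qed
qed




lemma core:
  assumes sg: "subgroup \<Gamma> Aff2H" and fr: "acts_freely \<Gamma>" and a: "a \<in> \<Gamma>" and g: "g \<in> \<Gamma>"
    and A1: "ma a = 1" and A2: "mc a = 0" and A3: "\<not> (mb a = 0 \<and> md a = 1)"
    and B3: "\<not> (ma g = 1 \<and> mc g = 0)"
  shows False
proof -
  obtain v where nz: "v \<noteq> (0,0)" and fv: "lin g v = v" using fixvec[OF sg fr g] by blast
  obtain v1 v2 where v: "v = (v1, v2)" by (cases v)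
  have f1: "ma g * v1 + mb g * v2 = v1" and f2: "mc g * v1 + md g * v2 = v2"
    using fv unfolding v by (simp_all add: lin_def)
  have v2: "v2 \<noteq> 0"
  proof
    assume "v2 = 0"
    then have v1: "v1 \<noteq> 0" using nz v by simp
    have "(ma g - 1) * v1 = 0" using f1 \<open>v2 = 0\<close> by (simp add: algebra_simps)
    then have "ma g = 1" using v1 by simp
    moreover have "mc g = 0" using f2 \<open>v2 = 0\<close> v1 by simp
    ultimately show False using B3 by simp
  qed
  define p where "p = v1 * inverse v2"
  have g1: "ma g * p + mb g = p"
  proof -
    have "(ma g * v1 + mb g * v2) * inverse v2 = v1 * inverse v2" using f1 by simp
    then show ?thesis using v2 unfolding p_def by (simp add: algebra_simps mult.assoc)
  qed
  have g2: "mc g * p + md g = 1"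
  proof -
    have "(mc g * v1 + md g * v2) * inverse v2 = v2 * inverse v2" using f2 by simp
    then show ?thesis using v2 unfolding p_def by (simp add: algebra_simps mult.assoc)
  qed
  define T where "T = AffM 1 (- p) 0 1 0 0"
  define T' where "T' = AffM 1 p 0 1 0 0"
  have TT: "affmul T T' = affid" "affmul T' T = affid" unfolding T_def T'_def by (simp_all add: affm_eq)
  note Tc = inv_explicit[OF TT]
  note ok = conj_ok[OF sg fr Tc(1)]
  define A where "A = T \<otimes>\<^bsub>Aff2H\<^esub> a \<otimes>\<^bsub>Aff2H\<^esub> inv\<^bsub>Aff2H\<^esub> T"
  define B where "B = T \<otimes>\<^bsub>Aff2H\<^esub> g \<otimes>\<^bsub>Aff2H\<^esub> inv\<^bsub>Aff2H\<^esub> T"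
  have AG: "A \<in> conjS T \<Gamma>" "B \<in> conjS T \<Gamma>" unfolding A_def B_def conjS_def using a g by auto
  have Aeq: "A = affmul (affmul T a) T'" "B = affmul (affmul T g) T'"
    unfolding A_def B_def Tc(2) by (simp_all add: Aff2H_simps)
  have PA: "ma A = 1" "mc A = 0" unfolding Aeq T_def T'_def using A1 A2 by simp_all
  have PA3: "\<not> (mb A = 0 \<and> md A = 1)"
  proof
    assume h: "mb A = 0 \<and> md A = 1"
    then have "md a = 1" unfolding Aeq T_def T'_def using A1 A2 by simp
    moreover have "mb a = 0" using h \<open>md a = 1\<close> unfolding Aeq T_def T'_def using A1 A2 by (simp add: algebra_simps)
    ultimately show False using A3 by simp
  qed
  have PB: "mb B = 0" "md B = 1"
  proof -
    have "mb B = (ma g * p + mb g) - p * (mc g * p + md g)" unfolding Aeq T_def T'_def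
      by (simp add: algebra_simps mult.assoc)
    then show "mb B = 0" using g1 g2 by simp
    show "md B = 1" unfolding Aeq T_def T'_def using g2 by simp
  qed
  have PB3: "\<not> (ma B = 1 \<and> mc B = 0)"
  proof
    assume h: "ma B = 1 \<and> mc B = 0"
    then have "mc g = 0" unfolding Aeq T_def T'_def by simp
    moreover have "ma g = 1" using h \<open>mc g = 0\<close> unfolding Aeq T_def T'_def by simp
    ultimately show False using B3 by simp
  qed
  show False by (rule core2[OF ok AG PA PA3 PB PB3])
qed

lemma basis:
  assumes "u \<noteq> (0,0)"
  shows "\<exists>K K'. affmul K K' = affid \<and> affmul K' K = affid \<and> lin K' (1,0) = u"
proof -
  obtain u1 u2 where u: "u = (u1, u2)" by (cases u)
  show ?thesis
  proof (cases "u1 = 0")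
    case False
    define K where "K = AffM (inverse u1) 0 (- (u2 * inverse u1)) 1 0 0"
    define K' where "K' = AffM u1 0 u2 1 0 0"
    have "affmul K K' = affid" "affmul K' K = affid" "lin K' (1,0) = u"
      unfolding K_def K'_def u using False by (simp_all add: affm_eq lin_def mult.assoc)
    then show ?thesis by blast
  next
    case True
    then have u2: "u2 \<noteq> 0" using assms u by simp
    define K where "K = AffM 0 (inverse u2) 1 0 0 0"
    define K' where "K' = AffM 0 1 u2 0 0 0"
    have "affmul K K' = affid" "affmul K' K = affid" "lin K' (1,0) = u"
      unfolding K_def K'_def u using True u2 by (simp_all add: affm_eq lin_def)
    then show ?thesis by blast
  qed
qed

lemma common:
  assumes sg: "subgroup \<Gamma> Aff2H" and fr: "acts_freely \<Gamma>"
  shows "\<exists>u. u \<noteq> (0,0) \<and> (\<forall>g\<in>\<Gamma>. lin g u = u)"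
proof (cases "\<forall>g\<in>\<Gamma>. \<forall>v. lin g v = v")
  case True
  then show ?thesis by (intro exI[of _ "(1,0)"], simp)
next
  case False
  then obtain g0 w where g0: "g0 \<in> \<Gamma>" and w: "lin g0 w \<noteq> w" by blast
  obtain u where u: "u \<noteq> (0,0)" "lin g0 u = u" using fixvec[OF sg fr g0] by blast
  obtain K K' where KK: "affmul K K' = affid" "affmul K' K = affid" and Ku: "lin K' (1,0) = u"
    using basis[OF u(1)] by blast
  note Kc = inv_explicit[OF KK]
  note ok = conj_ok[OF sg fr Kc(1)]
  have Ku': "lin K u = (1,0)" using Ku lin_cancel[OF KK(1)] by metis
  have "\<forall>g\<in>\<Gamma>. lin g u = u"
  proof
    fix g assume g: "g \<in> \<Gamma>"
    show "lin g u = u"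
    proof (rule ccontr)
      assume ne: "lin g u \<noteq> u"
      define A where "A = K \<otimes>\<^bsub>Aff2H\<^esub> g0 \<otimes>\<^bsub>Aff2H\<^esub> inv\<^bsub>Aff2H\<^esub> K"
      define B where "B = K \<otimes>\<^bsub>Aff2H\<^esub> g \<otimes>\<^bsub>Aff2H\<^esub> inv\<^bsub>Aff2H\<^esub> K"
      have AG: "A \<in> conjS K \<Gamma>" "B \<in> conjS K \<Gamma>" unfolding A_def B_def conjS_def using g0 g by auto
      have Aeq: "A = affmul (affmul K g0) K'" "B = affmul (affmul K g) K'"
        unfolding A_def B_def Kc(2) by (simp_all add: Aff2H_simps)
      have LA: "\<And>z. lin A (lin K z) = lin K (lin g0 z)" unfolding Aeq lin_mul using lin_cancel[OF KK(2)] by simp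
      have LB: "\<And>z. lin B (lin K z) = lin K (lin g z)" unfolding Aeq lin_mul using lin_cancel[OF KK(2)] by simp
      have "lin A (1,0) = (1,0)" using LA[of u] u(2) Ku' by simp
      then have A12: "ma A = 1" "mc A = 0" by (simp_all add: lin_e1)
      have A3: "\<not> (mb A = 0 \<and> md A = 1)"
      proof
        assume "mb A = 0 \<and> md A = 1"
        then have "\<And>z. lin A z = z" using A12 by (simp add: lin_def)
        then have "lin K (lin g0 w) = lin K w" using LA[of w] by simp
        then have "lin g0 w = w" using lin_cancel[OF KK(2)] by metis
        then show False using w by simp
      qed
      have B3: "\<not> (ma B = 1 \<and> mc B = 0)"
      proof
        assume "ma B = 1 \<and> mc B = 0"
        then have "lin B (1,0) = (1,0)" by (simp add: lin_e1)
        then have "lin K (lin g u) = lin K u" using LB[of u] Ku' by simp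
        then have "lin g u = u" using lin_cancel[OF KK(2)] by metis
        then show False using ne by simp
      qed
      show False by (rule core[OF ok AG A12 A3 B3])
    qed
  qed
  then show ?thesis using u(1) by blast
qed

theorem mainTheorem10:
  assumes "subgroup \<Gamma> Aff2H"
    and "acts_freely \<Gamma>"
  shows "\<exists>h\<in>carrier Aff2H. (\<lambda>g. h \<otimes>\<^bsub>Aff2H\<^esub> g \<otimes>\<^bsub>Aff2H\<^esub> inv\<^bsub>Aff2H\<^esub> h) ` \<Gamma> \<subseteq> G2"
proof -
  note sg = assms(1) and fr = assms(2)
  obtain u where u: "u \<noteq> (0,0)" "\<forall>g\<in>\<Gamma>. lin g u = u" using common[OF sg fr] by blast
  obtain K K' where KK: "affmul K K' = affid" "affmul K' K = affid" and Ku: "lin K' (1,0) = u"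
    using basis[OF u(1)] by blast
  note Kc = inv_explicit[OF KK]
  have Ku': "lin K u = (1,0)" using Ku lin_cancel[OF KK(1)] by metis
  have "(\<lambda>g. K \<otimes>\<^bsub>Aff2H\<^esub> g \<otimes>\<^bsub>Aff2H\<^esub> inv\<^bsub>Aff2H\<^esub> K) ` \<Gamma> \<subseteq> G2"
  proof
    fix x assume "x \<in> (\<lambda>g. K \<otimes>\<^bsub>Aff2H\<^esub> g \<otimes>\<^bsub>Aff2H\<^esub> inv\<^bsub>Aff2H\<^esub> K) ` \<Gamma>"
    then obtain g where g: "g \<in> \<Gamma>" and x: "x = K \<otimes>\<^bsub>Aff2H\<^esub> g \<otimes>\<^bsub>Aff2H\<^esub> inv\<^bsub>Aff2H\<^esub> K" by blast
    have xeq: "x = affmul (affmul K g) K'" unfolding x Kc(2) by (simp add: Aff2H_simps)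
    have "lin x (1,0) = (1,0)" unfolding xeq lin_mul using Ku u(2) g Ku' by simp
    then have x12: "ma x = 1" "mc x = 0" by (simp_all add: lin_e1)
    have "x \<in> conjS K \<Gamma>" unfolding conjS_def x using g by auto
    then have "x \<in> carrier Aff2H" using subgroup.mem_carrier[OF conj_ok(1)[OF sg fr Kc(1)]] by blast
    then obtain y where "affmul x y = affid" by (auto simp: Aff2H_simps aff_invertible_def)
    then have "md (affmul x y) = md affid" by simp
    then have "md x * md y = 1" using x12 by simp
    then have "md x \<noteq> 0" by auto
    then show "x \<in> G2" unfolding G2_def using x12 by (simp add: qops)
  qed
  then show ?thesis using Kc(1) by blast
qed


end
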